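(* For any oriented graph $G$, $\omega_{ro}(G) \leq \chi^*_o(G) \leq \chi_o(G)$.
   Context: An oriented graph is a finite directed graph with no directed cycle of length 1 or 2. A homomorphism of an oriented graph $G$ to an oriented graph $H$ is a map $f:V(G)\to V(H)$ such that $f(x)f(y)$ is an arc of $H$ whenever $xy$ is an arc of $G$. An oriented relative clique of $G$ is a set $R\subseteq V(G)$ such that $f(x)\neq f(y)$ for every homomorphism $f$ of $G$ to any oriented graph and all distinct $x,y\in R$; $\omega_{ro}(G)$ is the maximum size of an oriented relative clique. For a set $S$ of $k$ colors, a $b$-fold oriented $k$-coloring of $G$ is a map $f$ from $V(G)$ to the $b$-element subsets of $S$ such that (i) $f(x)\cap f(y)=\emptyset$ for every arc $xy$, and (ii) for all arcs $xy, zw$, $f(x)\cap f(w)\neq\emptyset$ implies $f(y)\cap f(z)=\emptyset$. $\chi^b_o(G)$ is the minimum $k$ admitting such a coloring; $\chi_o(G)=\chi^1_o(G)$ is the oriented chromatic number, and $\chi^*_o(G)=\lim_{b\to\infty}\chi^b_o(G)/b=\inf_{b\ge1}\chi^b_o(G)/b$ is the fractional oriented chromatic number. *)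

theory Defs
  imports Complex_Main
begin

definition oriented :: "'a set \<Rightarrow> ('a \<times> 'a) set \<Rightarrow> bool" where
  "oriented V A \<longleftrightarrow> finite V \<and> A \<subseteq> V \<times> V \<and> (\<forall>x. (x, x) \<notin> A)
     \<and> (\<forall>x y. (x, y) \<in> A \<longrightarrow> (y, x) \<notin> A)"

definition ohom :: "'a set \<Rightarrow> ('a \<times> 'a) set \<Rightarrow> 'b set \<Rightarrow> ('b \<times> 'b) set \<Rightarrow> ('a \<Rightarrow> 'b) \<Rightarrow> bool" where
  "ohom V A W B f \<longleftrightarrow> (\<forall>x\<in>V. f x \<in> W) \<and> (\<forall>(x, y)\<in>A. (f x, f y) \<in> B)"

text \<open>Target oriented graphs are taken with vertices in nat;
  since G is finite, every homomorphic image is finite and embeds into nat, so this is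
  equivalent to quantifying over all oriented graphs.\<close>
definition relative_clique :: "'a set \<Rightarrow> ('a \<times> 'a) set \<Rightarrow> 'a set \<Rightarrow> bool" where
  "relative_clique V A R \<longleftrightarrow> R \<subseteq> V \<and>
     (\<forall>(W :: nat set) B f. oriented W B \<and> ohom V A W B f \<longrightarrow> inj_on f R)"

definition omega_ro :: "'a set \<Rightarrow> ('a \<times> 'a) set \<Rightarrow> nat" where
  "omega_ro V A = Max {card R | R. relative_clique V A R}"

definition bfold_coloring :: "'a set \<Rightarrow> ('a \<times> 'a) set \<Rightarrow> nat \<Rightarrow> nat \<Rightarrow> ('a \<Rightarrow> nat set) \<Rightarrow> bool" where
  "bfold_coloring V A b k f \<longleftrightarrow>
     (\<forall>x\<in>V. f x \<subseteq> {..<k} \<and> card (f x) = b)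
     \<and> (\<forall>(x, y)\<in>A. f x \<inter> f y = {})
     \<and> (\<forall>(x, y)\<in>A. \<forall>(z, w)\<in>A. f x \<inter> f w \<noteq> {} \<longrightarrow> f y \<inter> f z = {})"

definition chi_b :: "'a set \<Rightarrow> ('a \<times> 'a) set \<Rightarrow> nat \<Rightarrow> nat" where
  "chi_b V A b = (LEAST k. \<exists>f. bfold_coloring V A b k f)"

definition chi_o :: "'a set \<Rightarrow> ('a \<times> 'a) set \<Rightarrow> nat" where
  "chi_o V A = chi_b V A 1"

definition chi_frac :: "'a set \<Rightarrow> ('a \<times> 'a) set \<Rightarrow> real" where
  "chi_frac V A = (INF b\<in>{1..}. real (chi_b V A b) / real b)"

end

theory Submission
  imports Defs
begin

lemma clique_disj:
  assumes or: "oriented V A" and rc: "relative_clique V A R"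
    and col: "bfold_coloring V A b k f" and b: "b \<ge> 1"
    and xR: "x \<in> R" and yR: "y \<in> R" and xy: "x \<noteq> y"
  shows "f x \<inter> f y = {}"
proof (rule ccontr)
  assume "f x \<inter> f y \<noteq> {}"
  then obtain c where c: "c \<in> f x" "c \<in> f y" by blast
  have RV: "R \<subseteq> V" using rc unfolding relative_clique_def by blast
  have AV: "A \<subseteq> V \<times> V" using or unfolding oriented_def by blast
  have fk: "\<And>v. v \<in> V \<Longrightarrow> f v \<subseteq> {..<k}" and fc: "\<And>v. v \<in> V \<Longrightarrow> card (f v) = b"
    using col unfolding bfold_coloring_def by auto
  have ne: "\<And>v. v \<in> V \<Longrightarrow> f v \<noteq> {}" using fc b by fastforce
  define B where "B = {(p, q). \<exists>u w. (u, w) \<in> A \<and> p \<in> f u \<and> q \<in> f w}"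
  define g where "g = (\<lambda>v. if v = x \<or> v = y then c else (SOME d. d \<in> f v))"
  have gv: "g v \<in> f v" if "v \<in> V" for v
  proof (cases "v = x \<or> v = y")
    case True then show ?thesis using c by (auto simp: g_def)
  next
    case False then show ?thesis using ne[OF that] by (auto simp: g_def intro: someI_ex)
  qed
  have c1: "\<forall>(u, w)\<in>A. f u \<inter> f w = {}" using col unfolding bfold_coloring_def by blast
  have c2: "\<forall>(u, w)\<in>A. \<forall>(z, t)\<in>A. f u \<inter> f t \<noteq> {} \<longrightarrow> f w \<inter> f z = {}"
    using col unfolding bfold_coloring_def by blast
  have "oriented {..<k} B"
    unfolding oriented_def
  proof (intro conjI allI impI)
    show "finite {..<k}" by simp
    show "B \<subseteq> {..<k} \<times> {..<k}"
    proof
      fix pq assume "pq \<in> B"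
      then obtain u w p q where "pq = (p, q)" "(u, w) \<in> A" "p \<in> f u" "q \<in> f w"
        unfolding B_def by blast
      moreover hence "u \<in> V" "w \<in> V" using AV by auto
      ultimately show "pq \<in> {..<k} \<times> {..<k}" using fk by blast
    qed
    fix p show "(p, p) \<notin> B" using c1 unfolding B_def by blast
  next
    fix p q assume "(p, q) \<in> B"
    then obtain u w where uw: "(u, w) \<in> A" "p \<in> f u" "q \<in> f w" unfolding B_def by blast
    show "(q, p) \<notin> B"
    proof
      assume "(q, p) \<in> B"
      then obtain z t where zt: "(z, t) \<in> A" "q \<in> f z" "p \<in> f t" unfolding B_def by blast
      have "f u \<inter> f t \<noteq> {}" using uw zt by blast
      hence "f w \<inter> f z = {}" using c2 uw(1) zt(1) by blast
      thus False using uw zt by blast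
    qed
  qed
  moreover have "ohom V A {..<k} B g"
    unfolding ohom_def
  proof (intro conjI ballI)
    fix v assume "v \<in> V" thus "g v \<in> {..<k}" using gv fk by blast
  next
    fix p assume "p \<in> A"
    then obtain u w where p: "p = (u, w)" "(u, w) \<in> A" by (cases p) auto
    hence "u \<in> V" "w \<in> V" using AV by auto
    hence "g u \<in> f u" "g w \<in> f w" using gv by auto
    hence "(g u, g w) \<in> B" unfolding B_def using p(2) by blast
    thus "case p of (x, y) \<Rightarrow> (g x, g y) \<in> B" using p(1) by simp
  qed
  ultimately have "inj_on g R" using rc unfolding relative_clique_def by blast
  moreover have "g x = g y" by (simp add: g_def)
  ultimately show False using xR yR xy by (meson inj_onD)
qed

lemma clique_bound:
  assumes or: "oriented V A" and rc: "relative_clique V A R"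
    and col: "bfold_coloring V A b k f" and b: "b \<ge> 1"
  shows "card R * b \<le> k"
proof -
  have RV: "R \<subseteq> V" using rc unfolding relative_clique_def by blast
  have fin: "finite V" using or unfolding oriented_def by blast
  hence finR: "finite R" using RV finite_subset by blast
  have fk: "\<And>v. v \<in> V \<Longrightarrow> f v \<subseteq> {..<k}" and fc: "\<And>v. v \<in> V \<Longrightarrow> card (f v) = b"
    using col unfolding bfold_coloring_def by auto
  have finf: "\<And>v. v \<in> V \<Longrightarrow> finite (f v)" using fk finite_subset by blast
  have "card (\<Union>(f ` R)) = (\<Sum>v\<in>R. card (f v))"
    apply (rule card_UN_disjoint[OF finR])
    using finf RV clique_disj[OF or rc col b] by auto
  also have "\<dots> = card R * b" using fc RV by (simp add: subset_iff)
  finally have "card R * b = card (\<Union>(f ` R))" by simp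
  also have "\<dots> \<le> card {..<k}" apply (rule card_mono) using fk RV by auto
  finally show ?thesis by simp
qed

lemma coloring_exists:
  assumes or: "oriented V A"
  shows "\<exists>k f. bfold_coloring V A b k f"
proof -
  have fin: "finite V" using or unfolding oriented_def by blast
  obtain idx where idx: "bij_betw idx V {..<card V}"
    using ex_bij_betw_finite_nat[OF fin] by (metis atLeast0LessThan)
  have inj: "inj_on idx V" and rng: "\<And>v. v \<in> V \<Longrightarrow> idx v < card V"
    using idx bij_betw_imp_inj_on bij_betwE by fastforce+
  define f where "f = (\<lambda>v. {idx v * b ..< idx v * b + b})"
  have disj: "f u \<inter> f w = {}" if "u \<in> V" "w \<in> V" "u \<noteq> w" for u w
  proof -
    have "idx u \<noteq> idx w" using inj that by (meson inj_onD)
    hence "idx u < idx w \<or> idx w < idx u" by arith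
    thus ?thesis
    proof
      assume "idx u < idx w" hence "idx u * b + b \<le> idx w * b"
        by (metis Suc_leI add_mult_distrib mult_Suc mult_le_mono1 add.commute)
      thus ?thesis unfolding f_def by auto
    next
      assume "idx w < idx u" hence "idx w * b + b \<le> idx u * b"
        by (metis Suc_leI add_mult_distrib mult_Suc mult_le_mono1 add.commute)
      thus ?thesis unfolding f_def by auto
    qed
  qed
  have AV: "A \<subseteq> V \<times> V" and nl: "\<And>x. (x, x) \<notin> A" and as: "\<And>x y. (x, y) \<in> A \<Longrightarrow> (y, x) \<notin> A"
    using or unfolding oriented_def by auto
  have "bfold_coloring V A b (card V * b) f"
    unfolding bfold_coloring_def
  proof (intro conjI ballI)
    fix v assume v: "v \<in> V"
    have "idx v * b + b \<le> card V * b" using rng[OF v]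
      by (metis Suc_leI add_mult_distrib mult_Suc mult_le_mono1 add.commute)
    thus "f v \<subseteq> {..<card V * b}" unfolding f_def by auto
    show "card (f v) = b" unfolding f_def by simp
  next
    fix p assume "p \<in> A"
    then obtain u w where p: "p = (u, w)" "(u, w) \<in> A" by (cases p) auto
    have "u \<in> V" "w \<in> V" using AV p(2) by auto
    moreover have "u \<noteq> w" using nl p(2) by auto
    ultimately show "case p of (x, y) \<Rightarrow> f x \<inter> f y = {}" using disj p(1) by simp
  next
    fix p assume "p \<in> A"
    then obtain u w where p: "p = (u, w)" "(u, w) \<in> A" by (cases p) auto
    show "case p of (x, y) \<Rightarrow> \<forall>(z, w)\<in>A. f x \<inter> f w \<noteq> {} \<longrightarrow> f y \<inter> f z = {}"
      unfolding p(1) case_prod_conv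
    proof (intro ballI)
      fix q assume "q \<in> A"
      then obtain z t where q: "q = (z, t)" "(z, t) \<in> A" by (cases q) auto
      show "case q of (z, t) \<Rightarrow> f u \<inter> f t \<noteq> {} \<longrightarrow> f w \<inter> f z = {}"
        unfolding q(1) case_prod_conv
      proof (intro impI)
        assume "f u \<inter> f t \<noteq> {}"
        moreover have "u \<in> V" "t \<in> V" using p(2) q(2) AV by auto
        ultimately have "u = t" using disj[of u t] by blast
        show "f w \<inter> f z = {}"
        proof (rule ccontr)
          assume "f w \<inter> f z \<noteq> {}"
          moreover have "w \<in> V" "z \<in> V" using p(2) q(2) AV by auto
          ultimately have "w = z" using disj[of w z] by blast
          thus False using as p(2) q(2) \<open>u = t\<close> by blast
        qed
      qed
    qed
  qed
  thus ?thesis by blast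
qed

lemma chi_b_col:
  assumes "oriented V A"
  shows "\<exists>f. bfold_coloring V A b (chi_b V A b) f"
  unfolding chi_b_def using coloring_exists[OF assms] by (rule LeastI_ex)

theorem theorem3:
  fixes V :: "'a set" and A :: "('a \<times> 'a) set"
  assumes "oriented V A"
  shows "real (omega_ro V A) \<le> chi_frac V A \<and> chi_frac V A \<le> real (chi_o V A)"
proof
  have bdd: "bdd_below ((\<lambda>b. real (chi_b V A b) / real b) ` {1..})"
    by (rule bdd_belowI[where m=0]) auto
  show "chi_frac V A \<le> real (chi_o V A)"
    unfolding chi_frac_def chi_o_def
    using cINF_lower[OF bdd, of 1] by simp
  have fin: "finite V" using assms unfolding oriented_def by blast
  let ?S = "{card R | R. relative_clique V A R}"
  have "?S \<subseteq> {..card V}"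
    using fin by (auto simp: relative_clique_def card_mono)
  hence finS: "finite ?S" using finite_subset by blast
  have "relative_clique V A {}" unfolding relative_clique_def by simp
  hence neS: "?S \<noteq> {}" by blast
  have "omega_ro V A \<in> ?S" unfolding omega_ro_def using Max_in[OF finS neS] .
  then obtain R where R: "relative_clique V A R" "omega_ro V A = card R" by auto
  show "real (omega_ro V A) \<le> chi_frac V A"
    unfolding chi_frac_def
  proof (rule cINF_greatest)
    show "{1::nat..} \<noteq> {}" by auto
  next
    fix b :: nat assume "b \<in> {1..}"
    hence b: "b \<ge> 1" by simp
    obtain f where "bfold_coloring V A b (chi_b V A b) f" using chi_b_col[OF assms] by blast
    from clique_bound[OF assms R(1) this b]
    have "real (card R) * real b \<le> real (chi_b V A b)"
      by (metis of_nat_le_iff of_nat_mult)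
    thus "real (omega_ro V A) \<le> real (chi_b V A b) / real b"
      using b R(2) by (simp add: pos_le_divide_eq)
  qed
qed

end
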